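(* Let $\mathcal T=(S,\Sigma,\kappa)$ be an STS, let $B\in\Sigma$, let $n\ge0$ and $\mathcal A=(A_0,\dots,A_n)\in\Sigma^{n+1}$, and let $p>0$. Assume that for every $\nu\in\mathrm{Dist}(S)$ such that $\nu_{\mathcal A}$ is well-defined, $\mathbb P^{\mathcal T}_{\nu_{\mathcal A}}(\mathbf F B)\ge p$. Then for every $\mu\in\mathrm{Dist}(S)$, $$\mathbb P^{\mathcal T}_\mu(\mathbf G\overline B\wedge\mathbf{GF}\phi_{\mathcal A})=0.$$ (In particular, for $n=0$ and $\mathcal A=(A)$: if $\mathbb P^{\mathcal T}_{\delta_s}(\mathbf F B)\ge p$ for all $s\in A$, then $\mathbb P^{\mathcal T}_\mu(\mathbf G\overline B\wedge\mathbf{GF}A)=0$ for all $\mu$.)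
   Context: A stochastic transition system (STS) is a triple $\mathcal T=(S,\Sigma,\kappa)$ where $(S,\Sigma)$ is a measurable space and $\kappa:S\times\Sigma\to[0,1]$ is a Markov kernel. $\mathrm{Dist}(S)$ is the set of probability distributions on $(S,\Sigma)$, $\delta_s$ the Dirac distribution at $s$. Runs are elements of $S^\omega$; $\mathrm{Cyl}(A_0,\dots,A_k)=\{s_0s_1\ldots: s_j\in A_j,\ 0\le j\le k\}$; $\mathbb P^{\mathcal T}_\mu$ is the probability measure on runs (with the $\sigma$-algebra generated by cylinders) induced by initial distribution $\mu$ and kernel $\kappa$. For a run $\rho=s_0s_1\ldots$, $\rho_{\ge k}=s_ks_{k+1}\ldots$. Notation: $\overline B=S\setminus B$; $\mathbf F B$ is the set of runs visiting $B$ at some step; $\mathbf G B$ the set of runs all of whose states lie in $B$; $\mathbf{GF}B$ the set of runs visiting $B$ infinitely often. For $\mathcal A=(A_0,\dots,A_n)\in\Sigma^{n+1}$, $\phi_{\mathcal A}$ is the set of runs $\rho$ with $s_j\in A_j$ for $0\le j\le n$, and $\mathbf{GF}\phi_{\mathcal A}$ is the set of runs $\rho$ such that $\rho_{\ge k}\in\phi_{\mathcal A}$ for infinitely many $k$. Conditional distribution: for $\nu\in\mathrm{Dist}(S)$ with $\mathbb P^{\mathcal T}_\nu(\mathrm{Cyl}(A_0,\dots,A_n))>0$, $\nu_{\mathcal A}$ is said to be well-defined and is the distribution $C\mapsto \mathbb P^{\mathcal T}_\nu(\mathrm{Cyl}(A_0,\dots,A_{n-1},A_n\cap C))/\mathbb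 P^{\mathcal T}_\nu(\mathrm{Cyl}(A_0,\dots,A_n))$ (the distribution of the state at step $n$ conditioned on $\phi_{\mathcal A}$); for a single set $A$ with $\nu(A)>0$, $\nu_A=\nu(\cdot\cap A)/\nu(A)$. *)

theory Defs
  imports "HOL-Probability.Probability"
begin

definition cyl :: "'a measure \<Rightarrow> 'a set list \<Rightarrow> 'a stream set" where
  "cyl M As = {\<omega> \<in> space (stream_space M). \<forall>j < length As. \<omega> !! j \<in> As ! j}"

text \<open>Iterated kernel integral: cyl_fun K [A_0,...,A_k] s is the probability, starting in
  state s, of the cylinder Cyl(A_0,...,A_k).\<close>
fun cyl_fun :: "('a \<Rightarrow> 'a measure) \<Rightarrow> 'a set list \<Rightarrow> 'a \<Rightarrow> ennreal" where
  "cyl_fun K [] s = 1"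
| "cyl_fun K (A # As) s = indicator A s * (\<integral>\<^sup>+ t. cyl_fun K As t \<partial>K s)"

text \<open>P is the run-measure operator of the STS (M, K): for every initial distribution mu,
  P mu is a probability measure on runs (product sigma algebra = generated by cylinders)
  whose cylinder probabilities are those induced by mu and the kernel K.\<close>
definition is_path_measure :: "'a measure \<Rightarrow> ('a \<Rightarrow> 'a measure) \<Rightarrow> ('a measure \<Rightarrow> 'a stream measure) \<Rightarrow> bool" where
  "is_path_measure M K P \<longleftrightarrow>
     (\<forall>\<mu> \<in> space (prob_algebra M).
        P \<mu> \<in> space (prob_algebra (stream_space M)) \<and>
        (\<forall>As. set As \<subseteq> sets M \<longrightarrow> emeasure (P \<mu>) (cyl M As) = (\<integral>\<^sup>+ s. cyl_fun K As s \<partial>\<mu>)))"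

text \<open>Conditional distribution nu_A: distribution of the state at step n = length As - 1
  under P nu conditioned on the cylinder phi_A.\<close>
definition cond_dist :: "'a measure \<Rightarrow> ('a measure \<Rightarrow> 'a stream measure) \<Rightarrow> 'a set list \<Rightarrow> 'a measure \<Rightarrow> 'a measure" where
  "cond_dist M P As \<nu> = distr (uniform_measure (P \<nu>) (cyl M As)) M (\<lambda>\<omega>. \<omega> !! (length As - 1))"

definition runs_F :: "'a measure \<Rightarrow> 'a set \<Rightarrow> 'a stream set" where
  "runs_F M B = {\<omega> \<in> space (stream_space M). \<exists>k. \<omega> !! k \<in> B}"

definition runs_G :: "'a measure \<Rightarrow> 'a set \<Rightarrow> 'a stream set" where
  "runs_G M B = {\<omega> \<in> space (stream_space M). \<forall>k. \<omega> !! k \<in> B}"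

definition runs_GF_phi :: "'a measure \<Rightarrow> 'a set list \<Rightarrow> 'a stream set" where
  "runs_GF_phi M As = {\<omega> \<in> space (stream_space M). \<exists>\<^sub>\<infinity>k. sdrop k \<omega> \<in> cyl M As}"

end

theory Submission
  imports Defs
begin

lemma cyl_scylinder: "cyl M As = scylinder (space M) As"
proof (induction As)
  case Nil then show ?case by (simp add: cyl_def space_stream_space)
next
  case (Cons A As)
  show ?case
  proof (intro set_eqI iffI)
    fix \<omega> assume "\<omega> \<in> cyl M (A # As)"
    then have "\<omega> \<in> streams (space M)" "\<forall>j<Suc (length As). \<omega> !! j \<in> (A#As) ! j"
      by (auto simp: cyl_def space_stream_space)
    moreover have "stl \<omega> \<in> cyl M As"
    proof -
      have "\<forall>j<length As. stl \<omega> !! j \<in> As ! j"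
      proof (intro allI impI)
        fix j assume "j < length As"
        then have "\<omega> !! Suc j \<in> (A#As) ! Suc j" using calculation(2) by auto
        then show "stl \<omega> !! j \<in> As ! j" by simp
      qed
      then show ?thesis using calculation(1) by (auto simp: cyl_def space_stream_space streams_stl)
    qed
    ultimately show "\<omega> \<in> scylinder (space M) (A # As)"
      using Cons.IH by (auto simp: snth.simps(1)[symmetric] simp del: snth.simps(1))
  next
    fix \<omega> assume "\<omega> \<in> scylinder (space M) (A # As)"
    then have "\<omega> \<in> streams (space M)" "shd \<omega> \<in> A" "stl \<omega> \<in> cyl M As" using Cons.IH by auto
    then show "\<omega> \<in> cyl M (A # As)"
      by (auto simp: cyl_def space_stream_space less_Suc_eq_0_disj)
  qed
qed

lemma Int_stable_scylinder: "Int_stable (scylinder (space M) ` lists (sets M))"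
proof (rule Int_stableI_image)
  fix xs ys assume "xs \<in> lists (sets M)" "ys \<in> lists (sets M)"
  then show "\<exists>zs\<in>lists (sets M). scylinder (space M) xs \<inter> scylinder (space M) ys = scylinder (space M) zs"
  proof (induction xs arbitrary: ys)
    case Nil then show ?case
      by (auto simp add: Int_absorb1 scylinder_streams)
  next
    case xs: (Cons x xs)
    show ?case
    proof (cases ys)
      case Nil with xs.hyps show ?thesis
        by (auto simp add: Int_absorb2 scylinder_streams intro!: bexI[of _ "x#xs"])
    next
      case ys: (Cons y ys')
      with xs.IH[of ys'] xs.prems obtain zs where
        "zs \<in> lists (sets M)" and eq: "scylinder (space M) xs \<inter> scylinder (space M) ys' = scylinder (space M) zs"
        by auto
      show ?thesis
      proof (intro bexI[of _ "(x \<inter> y)#zs"])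
        show "x \<inter> y # zs \<in> lists (sets M)"
          using \<open>zs\<in>lists (sets M)\<close> \<open>x\<in>sets M\<close> \<open>ys\<in>lists (sets M)\<close> ys by auto
        show "scylinder (space M) (x # xs) \<inter> scylinder (space M) ys = scylinder (space M) (x \<inter> y # zs)"
          by (auto simp add: eq[symmetric] ys)
      qed
    qed
  qed
qed

lemma sets_stream_space_scylinder:
  "sets (stream_space M) = sigma_sets (streams (space M)) (scylinder (space M) ` lists (sets M))"
proof -
  let ?G = "scylinder (space M) ` lists (sets M)"
  have sc_Pow: "?G \<subseteq> Pow (streams (space M))"
    using scylinder_streams by auto
  have "sets (stream_space M) = sets (sigma (streams (space M)) ?G)"
    (is "?S = sets ?R")
  proof (rule antisym)
    let ?V = "\<lambda>i. vimage_algebra (streams (space M)) (\<lambda>s. s !! i) M"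
    show "?S \<subseteq> sets ?R"
      unfolding sets_stream_space_eq
    proof (safe intro!: sets_Sup_in_sets del: subsetI equalityI)
      fix i :: nat
      show "space (?V i) = space ?R"
        using scylinder_streams by (subst space_measure_of) auto
      { fix A assume "A \<in> sets M"
        then have "scylinder (space M) (replicate i (space M) @ [A]) = (\<lambda>s. s !! i) -` A \<inter> streams (space M)"
          by (induction i) (auto simp add: streams_shd streams_stl cong: conj_cong)
        moreover have "scylinder (space M) (replicate i (space M) @ [A]) \<in> ?G"
          using \<open>A \<in> sets M\<close> by auto
        ultimately have "(\<lambda>s. s !! i) -` A \<inter> streams (space M) \<in> sets ?R"
          using sc_Pow by (metis in_measure_of) }
      moreover have SM: "sets M = sets (sigma (space M) (sets M))"
        by (simp add: sets.sigma_sets_eq)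
      ultimately show "sets (?V i) \<subseteq> sets ?R"
        apply (subst vimage_algebra_cong[OF refl refl SM])
        apply (subst vimage_algebra_sigma)
        apply (rule sets.space_closed)
        apply (simp add: streams_iff_snth) []
        apply (subst sigma_le_sets)
        apply auto
        done
    qed
    show "sets ?R \<subseteq> ?S"
      unfolding sigma_le_sets[OF sc_Pow] by (auto intro!: sets_scylinder)
  qed
  then show ?thesis using sc_Pow by simp
qed

primrec sig :: "('a \<Rightarrow> 'a measure) \<Rightarrow> 'a set list \<Rightarrow> 'a measure \<Rightarrow> 'a measure" where
  "sig K [] \<mu> = \<mu>"
| "sig K (C # Cs) \<mu> = sig K Cs (density \<mu> (indicator C) \<bind> K)"

locale sts =
  fixes M :: "'a measure" and K :: "'a \<Rightarrow> 'a measure" and P :: "'a measure \<Rightarrow> 'a stream measure"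
  assumes kernel: "K \<in> M \<rightarrow>\<^sub>M prob_algebra M"
    and path: "is_path_measure M K P"
begin

lemma K_sub[measurable]: "K \<in> M \<rightarrow>\<^sub>M subprob_algebra M"
  using kernel by (rule measurable_prob_algebraD)

lemma K_space: "s \<in> space M \<Longrightarrow> prob_space (K s) \<and> sets (K s) = sets M"
  using measurable_space[OF kernel] by (auto simp: space_prob_algebra)

lemma cyl_sets[measurable]: "set As \<subseteq> sets M \<Longrightarrow> cyl M As \<in> sets (stream_space M)"
  unfolding cyl_scylinder by (rule sets_scylinder) auto

lemma P_space: "\<mu> \<in> space (prob_algebra M) \<Longrightarrow> prob_space (P \<mu>) \<and> sets (P \<mu>) = sets (stream_space M)"
  using path by (auto simp: is_path_measure_def space_prob_algebra)

lemma P_cyl: "\<mu> \<in> space (prob_algebra M) \<Longrightarrow> set As \<subseteq> sets M \<Longrightarrow>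
   emeasure (P \<mu>) (cyl M As) = (\<integral>\<^sup>+ s. cyl_fun K As s \<partial>\<mu>)"
  using path by (auto simp: is_path_measure_def)

lemma cyl_fun_measurable[measurable]: "set As \<subseteq> sets M \<Longrightarrow> cyl_fun K As \<in> borel_measurable M"
proof (induction As)
  case Nil then show ?case by simp
next
  case (Cons A As)
  then have [measurable]: "A \<in> sets M" "cyl_fun K As \<in> borel_measurable M" by auto
  have "(\<lambda>s. \<integral>\<^sup>+ t. cyl_fun K As t \<partial>K s) \<in> borel_measurable M"
    by (rule nn_integral_measurable_subprob_algebra2[where N=M]) (auto intro: K_sub)
  then show ?case by simp
qed

lemma sig_sets: "sets \<mu> = sets M \<Longrightarrow> space M \<noteq> {} \<Longrightarrow> sets (sig K Cs \<mu>) = sets M"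
proof (induction Cs arbitrary: \<mu>)
  case Nil then show ?case by simp
next
  case (Cons C Cs)
  have "space (density \<mu> (indicator C)) \<noteq> {}"
    using Cons.prems sets_eq_imp_space_eq[OF Cons.prems(1)] by simp
  then have "sets (density \<mu> (indicator C) \<bind> K) = sets M"
    using Cons.prems K_space sets_eq_imp_space_eq[OF Cons.prems(1)] by (subst sets_bind[where N=M]) auto
  then show ?case using Cons by simp
qed

lemma J: "sets \<mu> = sets M \<Longrightarrow> space M \<noteq> {} \<Longrightarrow> set Cs \<subseteq> sets M \<Longrightarrow> set Ys \<subseteq> sets M \<Longrightarrow>
  (\<integral>\<^sup>+ s. cyl_fun K (Cs @ Ys) s \<partial>\<mu>) = (\<integral>\<^sup>+ s. cyl_fun K Ys s \<partial>sig K Cs \<mu>)"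
proof (induction Cs arbitrary: \<mu>)
  case Nil then show ?case by simp
next
  case (Cons C Cs)
  have Cm: "C \<in> sets \<mu>" using Cons.prems by auto
  have m1: "cyl_fun K (Cs @ Ys) \<in> borel_measurable M" using Cons.prems by (intro cyl_fun_measurable) auto
  have m2: "(\<lambda>s. \<integral>\<^sup>+ t. cyl_fun K (Cs @ Ys) t \<partial>K s) \<in> borel_measurable M"
    by (rule nn_integral_measurable_subprob_algebra2[where N=M]) (auto intro: K_sub simp: case_prod_beta' intro!: measurable_compose[OF measurable_snd m1])
  have Kd: "K \<in> density \<mu> (indicator C) \<rightarrow>\<^sub>M subprob_algebra M"
    using K_sub Cons.prems by (simp cong: measurable_cong_sets)
  have "(\<integral>\<^sup>+ s. cyl_fun K ((C # Cs) @ Ys) s \<partial>\<mu>) =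
        (\<integral>\<^sup>+ s. indicator C s * (\<integral>\<^sup>+ t. cyl_fun K (Cs @ Ys) t \<partial>K s) \<partial>\<mu>)" by simp
  also have "\<dots> = (\<integral>\<^sup>+ s. (\<integral>\<^sup>+ t. cyl_fun K (Cs @ Ys) t \<partial>K s) \<partial>density \<mu> (indicator C))"
    using m2 Cm Cons.prems(1) by (subst nn_integral_density) (auto cong: measurable_cong_sets)
  also have "\<dots> = (\<integral>\<^sup>+ t. cyl_fun K (Cs @ Ys) t \<partial>(density \<mu> (indicator C) \<bind> K))"
    by (rule nn_integral_bind[symmetric, OF m1 Kd])
  also have "\<dots> = (\<integral>\<^sup>+ s. cyl_fun K Ys s \<partial>sig K Cs (density \<mu> (indicator C) \<bind> K))"
  proof (rule Cons.IH)
    have "space (density \<mu> (indicator C)) \<noteq> {}"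
      using Cons.prems sets_eq_imp_space_eq[OF Cons.prems(1)] by simp
    then show "sets (density \<mu> (indicator C) \<bind> K) = sets M"
      using Cons.prems K_space sets_eq_imp_space_eq[OF Cons.prems(1)] by (subst sets_bind[where N=M]) auto
  qed (use Cons.prems in auto)
  finally show ?case by simp
qed

lemma return_prob: "s \<in> space M \<Longrightarrow> return M s \<in> space (prob_algebra M)"
  by (simp add: space_prob_algebra prob_space_return)

lemma Q_cyl: "s \<in> space M \<Longrightarrow> set Ds \<subseteq> sets M \<Longrightarrow>
  emeasure (P (return M s)) (cyl M Ds) = cyl_fun K Ds s"
  by (simp add: P_cyl return_prob nn_integral_return cyl_fun_measurable)

lemma Q_space: "s \<in> space M \<Longrightarrow> prob_space (P (return M s)) \<and> sets (P (return M s)) = sets (stream_space M)"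
  using P_space return_prob by blast

lemma Q_meas[measurable]: "(\<lambda>s. P (return M s)) \<in> M \<rightarrow>\<^sub>M prob_algebra (stream_space M)"
proof (rule measurable_prob_algebra_generated[OF sets_stream_space_scylinder Int_stable_scylinder])
  show "scylinder (space M) ` lists (sets M) \<subseteq> Pow (streams (space M))"
    using scylinder_streams by auto
  fix a assume "a \<in> space M"
  then show "prob_space (P (return M a))" "sets (P (return M a)) = sets (stream_space M)"
    using Q_space by auto
next
  fix A assume "A \<in> scylinder (space M) ` lists (sets M)"
  then obtain Ds where Ds: "set Ds \<subseteq> sets M" "A = cyl M Ds"
    by (auto simp: cyl_scylinder)
  have "(\<lambda>a. emeasure (P (return M a)) A) \<in> borel_measurable M \<longleftrightarrow> cyl_fun K Ds \<in> borel_measurable M"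
    by (rule measurable_cong) (simp add: Ds Q_cyl)
  then show "(\<lambda>a. emeasure (P (return M a)) A) \<in> borel_measurable M"
    using cyl_fun_measurable[OF Ds(1)] by simp
qed

lemma cyl_append: "cyl M (Cs @ [D]) = cyl M Cs \<inter> {\<omega> \<in> space (stream_space M). \<omega> !! length Cs \<in> D}"
  by (auto simp: cyl_def nth_append less_Suc_eq)

lemma cyl_fun_Nil': "cyl_fun K [] = (\<lambda>_. 1)" by auto

lemma cyl_fun_single: "s \<in> space M \<Longrightarrow> cyl_fun K [D] s = indicator D s"
  using K_space[of s] by (simp add: cyl_fun_Nil' prob_space.emeasure_space_1)

lemma prob_space_nonempty: "\<mu> \<in> space (prob_algebra M) \<Longrightarrow> space M \<noteq> {}"
  by (auto simp: space_prob_algebra) (metis prob_space.not_empty sets_eq_imp_space_eq)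

lemma SIG:
  assumes \<mu>: "\<mu> \<in> space (prob_algebra M)" and Cs: "set Cs \<subseteq> sets M"
  shows "distr (density (P \<mu>) (indicator (cyl M Cs))) M (\<lambda>\<omega>. \<omega> !! length Cs) = sig K Cs \<mu>"
proof (rule measure_eqI)
  have sm: "sets \<mu> = sets M" using \<mu> by (simp add: space_prob_algebra)
  have ne: "space M \<noteq> {}" using prob_space_nonempty[OF \<mu>] .
  show "sets (distr (density (P \<mu>) (indicator (cyl M Cs))) M (\<lambda>\<omega>. \<omega> !! length Cs)) = sets (sig K Cs \<mu>)"
    using sig_sets[OF sm ne] by simp
  fix D assume "D \<in> sets (distr (density (P \<mu>) (indicator (cyl M Cs))) M (\<lambda>\<omega>. \<omega> !! length Cs))"
  then have D[measurable]: "D \<in> sets M" by simp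
  have sP: "sets (P \<mu>) = sets (stream_space M)" and spP: "space (P \<mu>) = space (stream_space M)"
    using P_space[OF \<mu>] sets_eq_imp_space_eq by auto
  have snm: "(\<lambda>\<omega>. \<omega> !! length Cs) \<in> measurable (density (P \<mu>) (indicator (cyl M Cs))) M"
    using sP by (simp cong: measurable_cong_sets)
  have "emeasure (distr (density (P \<mu>) (indicator (cyl M Cs))) M (\<lambda>\<omega>. \<omega> !! length Cs)) D
      = emeasure (density (P \<mu>) (indicator (cyl M Cs))) ((\<lambda>\<omega>. \<omega> !! length Cs) -` D \<inter> space (P \<mu>))"
    by (subst emeasure_distr[OF snm D]) simp
  also have "\<dots> = emeasure (P \<mu>) (cyl M Cs \<inter> ((\<lambda>\<omega>. \<omega> !! length Cs) -` D \<inter> space (P \<mu>)))"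
    using Cs sP by (intro emeasure_restricted) (auto simp: spP)
  also have "cyl M Cs \<inter> ((\<lambda>\<omega>. \<omega> !! length Cs) -` D \<inter> space (P \<mu>)) = cyl M (Cs @ [D])"
    by (auto simp: cyl_append spP)
  also have "emeasure (P \<mu>) (cyl M (Cs @ [D])) = (\<integral>\<^sup>+ s. cyl_fun K (Cs @ [D]) s \<partial>\<mu>)"
    using Cs by (intro P_cyl \<mu>) auto
  also have "\<dots> = (\<integral>\<^sup>+ s. cyl_fun K [D] s \<partial>sig K Cs \<mu>)"
    using Cs by (intro J sm ne) auto
  also have "\<dots> = (\<integral>\<^sup>+ s. indicator D s \<partial>sig K Cs \<mu>)"
    using sets_eq_imp_space_eq[OF sig_sets[OF sm ne]] by (intro nn_integral_cong) (simp add: cyl_fun_single del: cyl_fun.simps)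
  also have "\<dots> = emeasure (sig K Cs \<mu>) D"
    using sig_sets[OF sm ne] by simp
  finally show "emeasure (distr (density (P \<mu>) (indicator (cyl M Cs))) M (\<lambda>\<omega>. \<omega> !! length Cs)) D = emeasure (sig K Cs \<mu>) D" .
qed

lemma shift_streams': "\<omega> \<in> streams S \<Longrightarrow> \<omega>' \<in> streams S \<Longrightarrow> stake k \<omega> @- \<omega>' \<in> streams S"
  by (auto simp: streams_iff_snth shift_snth)

lemma shift_cyl:
  assumes \<omega>: "\<omega> \<in> streams (space M)"
  shows "{\<omega>' \<in> space (stream_space M). stake k \<omega> @- \<omega>' \<in> cyl M xs} =
    (if \<omega> \<in> cyl M (take k xs) then cyl M (drop k xs) else {})"
proof -
  have "stake k \<omega> @- \<omega>' \<in> cyl M xs \<longleftrightarrow> \<omega> \<in> cyl M (take k xs) \<and> \<omega>' \<in> cyl M (drop k xs)"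
    if \<omega>': "\<omega>' \<in> streams (space M)" for \<omega>'
  proof -
    have "stake k \<omega> @- \<omega>' \<in> cyl M xs \<longleftrightarrow> (\<forall>j<length xs. (if j < k then \<omega> !! j else \<omega>' !! (j - k)) \<in> xs ! j)"
      using shift_streams'[OF \<omega> \<omega>'] by (simp add: cyl_def space_stream_space shift_snth)
    also have "\<dots> \<longleftrightarrow> (\<forall>j<length (take k xs). \<omega> !! j \<in> take k xs ! j) \<and> (\<forall>j<length (drop k xs). \<omega>' !! j \<in> drop k xs ! j)"
    proof safe
      fix j assume H: "\<forall>j<length xs. (if j < k then \<omega> !! j else \<omega>' !! (j - k)) \<in> xs ! j"
      { assume "j < length (take k xs)" then show "\<omega> !! j \<in> take k xs ! j" using H[rule_format, of j] by auto }
      { assume "j < length (drop k xs)" then show "\<omega>' !! j \<in> drop k xs ! j" using H[rule_format, of "j + k"] by (auto simp: add.commute) }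
    next
      fix j assume H1: "\<forall>j<length (take k xs). \<omega> !! j \<in> take k xs ! j"
        and H2: "\<forall>j<length (drop k xs). \<omega>' !! j \<in> drop k xs ! j" and j: "j < length xs"
      show "(if j < k then \<omega> !! j else \<omega>' !! (j - k)) \<in> xs ! j"
        using H1[rule_format, of j] H2[rule_format, of "j - k"] j by auto
    qed
    also have "\<dots> \<longleftrightarrow> \<omega> \<in> cyl M (take k xs) \<and> \<omega>' \<in> cyl M (drop k xs)"
      using \<omega> \<omega>' by (simp add: cyl_def space_stream_space)
    finally show ?thesis .
  qed
  then show ?thesis by (auto simp: space_stream_space cyl_def)
qed

lemma P_sets: "\<mu> \<in> space (prob_algebra M) \<Longrightarrow> sets (P \<mu>) = sets (stream_space M)"
  using P_space by blast

lemma P_space': "\<mu> \<in> space (prob_algebra M) \<Longrightarrow> space (P \<mu>) = space (stream_space M)"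
  using P_space sets_eq_imp_space_eq by blast

lemma P_prob_alg: "\<mu> \<in> space (prob_algebra M) \<Longrightarrow> P \<mu> \<in> space (prob_algebra (stream_space M))"
  using P_space by (simp add: space_prob_algebra)

lemma Nk_meas: "(\<lambda>\<omega>. distr (P (return M (\<omega> !! k))) (stream_space M) (\<lambda>\<omega>'. stake k \<omega> @- \<omega>'))
   \<in> stream_space M \<rightarrow>\<^sub>M prob_algebra (stream_space M)"
proof (rule measurable_distr_prob_space2)
  show "(\<lambda>\<omega>. P (return M (\<omega> !! k))) \<in> stream_space M \<rightarrow>\<^sub>M prob_algebra (stream_space M)"
    by (rule measurable_compose[OF measurable_snth Q_meas])
  show "(\<lambda>(x, y). stake k x @- y) \<in> stream_space M \<Otimes>\<^sub>M stream_space M \<rightarrow>\<^sub>M stream_space M"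
    by (simp add: case_prod_beta')
qed

lemma Markov_bind:
  assumes \<mu>: "\<mu> \<in> space (prob_algebra M)"
  shows "P \<mu> = P \<mu> \<bind> (\<lambda>\<omega>. distr (P (return M (\<omega> !! k))) (stream_space M) (\<lambda>\<omega>'. stake k \<omega> @- \<omega>'))"
    (is "_ = P \<mu> \<bind> ?N")
proof (rule stream_space_eq_scylinder[where S=M and G="sets M" and C="{space M}"])
  have Nm: "?N \<in> P \<mu> \<rightarrow>\<^sub>M prob_algebra (stream_space M)"
    using Nk_meas P_sets[OF \<mu>] by (simp cong: measurable_cong_sets)
  have Nm': "?N \<in> P \<mu> \<rightarrow>\<^sub>M subprob_algebra (stream_space M)"
    using measurable_prob_algebraD[OF Nm] .
  have Pp: "P \<mu> \<in> space (prob_algebra (stream_space M))" using P_prob_alg[OF \<mu>] .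
  show "prob_space (P \<mu>)" using P_space[OF \<mu>] by blast
  show "prob_space (P \<mu> \<bind> ?N)" using prob_space_bind'[OF _ Nm] Pp P_sets[OF \<mu>]
    by (auto simp: space_prob_algebra)
  show "Int_stable (sets M)" by (auto simp: Int_stable_def)
  show "sets M = sets (sigma (space M) (sets M))" by (simp add: sets.sigma_sets_eq)
  show "countable {space M}" "{space M} \<subseteq> sets M" "\<Union> {space M} = space M" "sets M \<subseteq> Pow (space M)"
    using sets.space_closed by auto
  show "sets (P \<mu>) = sets (stream_space M)" using P_sets[OF \<mu>] .
  show "sets (P \<mu> \<bind> ?N) = sets (stream_space M)"
    using sets_bind'[OF _ Nm] Pp P_sets[OF \<mu>] by (auto simp: space_prob_algebra)
  fix xs :: "'a set list" assume "xs \<noteq> []" "xs \<in> lists (sets M)"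
  then have xs: "set xs \<subseteq> sets M" by auto
  have ne: "space (P \<mu>) \<noteq> {}" using P_space[OF \<mu>] prob_space.not_empty by blast
  have sm: "sets \<mu> = sets M" using \<mu> by (simp add: space_prob_algebra)
  have neM: "space M \<noteq> {}" using prob_space_nonempty[OF \<mu>] .
  have "emeasure (P \<mu> \<bind> ?N) (cyl M xs) = (\<integral>\<^sup>+\<omega>. emeasure (?N \<omega>) (cyl M xs) \<partial>P \<mu>)"
    using xs by (intro emeasure_bind[OF ne Nm']) auto
  also have "\<dots> = (\<integral>\<^sup>+\<omega>. indicator (cyl M (take k xs)) \<omega> * cyl_fun K (drop k xs) (\<omega> !! k) \<partial>P \<mu>)"
  proof (rule nn_integral_cong)
    fix \<omega> assume "\<omega> \<in> space (P \<mu>)"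
    then have \<omega>: "\<omega> \<in> streams (space M)" by (simp add: P_space'[OF \<mu>] space_stream_space)
    have k: "\<omega> !! k \<in> space M" using \<omega> by (simp add: snth_in)
    have sm: "(\<lambda>\<omega>'. stake k \<omega> @- \<omega>') \<in> P (return M (\<omega> !! k)) \<rightarrow>\<^sub>M stream_space M"
    proof -
      have "(\<lambda>x. stake k \<omega> @- x) \<in> stream_space M \<rightarrow>\<^sub>M stream_space M"
        apply (rule measurable_shift)
         apply (rule measurable_const)
         apply (simp add: space_stream_space \<omega>)
        apply (rule measurable_ident_sets)
        apply simp
        done
      then show ?thesis using Q_space[OF k] by (simp cong: measurable_cong_sets)
    qed
    have "emeasure (?N \<omega>) (cyl M xs) = emeasure (P (return M (\<omega> !! k)))
          ((\<lambda>\<omega>'. stake k \<omega> @- \<omega>') -` cyl M xs \<inter> space (P (return M (\<omega> !! k))))"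
      using xs by (intro emeasure_distr[OF sm]) auto
    also have "(\<lambda>\<omega>'. stake k \<omega> @- \<omega>') -` cyl M xs \<inter> space (P (return M (\<omega> !! k))) =
       {\<omega>' \<in> space (stream_space M). stake k \<omega> @- \<omega>' \<in> cyl M xs}"
      using Q_space[OF k] sets_eq_imp_space_eq by blast
    also have "\<dots> = (if \<omega> \<in> cyl M (take k xs) then cyl M (drop k xs) else {})"
      by (rule shift_cyl[OF \<omega>])
    finally show "emeasure (?N \<omega>) (cyl M xs) = indicator (cyl M (take k xs)) \<omega> * cyl_fun K (drop k xs) (\<omega> !! k)"
      using Q_cyl[OF k, of "drop k xs"] xs by (auto dest: in_set_dropD)
  qed
  also have "\<dots> = emeasure (P \<mu>) (cyl M xs)"
  proof (cases "k \<le> length xs")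
    case True
    have lt: "length (take k xs) = k" using True by simp
    have tk: "set (take k xs) \<subseteq> sets M" "set (drop k xs) \<subseteq> sets M" using xs
      by (auto dest: in_set_takeD in_set_dropD)
    have cm: "cyl M (take k xs) \<in> sets (P \<mu>)" using tk P_sets[OF \<mu>] by simp
    have fm: "(\<lambda>\<omega>. cyl_fun K (drop k xs) (\<omega> !! k)) \<in> borel_measurable (P \<mu>)"
      using P_sets[OF \<mu>] tk
      by (simp cong: measurable_cong_sets)
    have "(\<integral>\<^sup>+\<omega>. indicator (cyl M (take k xs)) \<omega> * cyl_fun K (drop k xs) (\<omega> !! k) \<partial>P \<mu>)
        = (\<integral>\<^sup>+\<omega>. cyl_fun K (drop k xs) (\<omega> !! k) \<partial>density (P \<mu>) (indicator (cyl M (take k xs))))"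
      using cm fm by (subst nn_integral_density) auto
    also have "\<dots> = (\<integral>\<^sup>+s. cyl_fun K (drop k xs) s \<partial>distr (density (P \<mu>) (indicator (cyl M (take k xs)))) M (\<lambda>\<omega>. \<omega> !! length (take k xs)))"
      using P_sets[OF \<mu>] tk lt
      by (subst nn_integral_distr) (auto cong: measurable_cong_sets intro: cyl_fun_measurable)
    also have "\<dots> = (\<integral>\<^sup>+s. cyl_fun K (drop k xs) s \<partial>sig K (take k xs) \<mu>)"
      by (simp only: SIG[OF \<mu> tk(1)])
    also have "\<dots> = (\<integral>\<^sup>+s. cyl_fun K (take k xs @ drop k xs) s \<partial>\<mu>)"
      by (rule J[symmetric, OF sm neM tk])
    also have "\<dots> = emeasure (P \<mu>) (cyl M xs)"
      using P_cyl[OF \<mu> xs] by simp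
    finally show ?thesis .
  next
    case False
    then have "take k xs = xs" "drop k xs = []" by auto
    then show ?thesis using xs P_sets[OF \<mu>] by (simp add: cyl_fun_Nil')
  qed
  finally show "emeasure (P \<mu>) (scylinder (space M) xs) = emeasure (P \<mu> \<bind> ?N) (scylinder (space M) xs)"
    by (simp add: cyl_scylinder)
qed

lemma Qk_emeas[measurable]: "Z \<in> sets (stream_space M) \<Longrightarrow>
  (\<lambda>\<omega>. emeasure (P (return M (\<omega> !! k))) Z) \<in> borel_measurable (stream_space M)"
  by (rule measurable_compose[OF measurable_compose[OF measurable_snth measurable_prob_algebraD[OF Q_meas]]
        measurable_emeasure_subprob_algebra])

lemma M3:
  assumes \<mu>: "\<mu> \<in> space (prob_algebra M)" and X: "X \<in> sets (stream_space M)"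
  shows "emeasure (P \<mu>) X = (\<integral>\<^sup>+\<omega>. emeasure (P (return M (\<omega> !! k)))
            {\<omega>' \<in> space (stream_space M). stake k \<omega> @- \<omega>' \<in> X} \<partial>P \<mu>)"
proof -
  let ?N = "\<lambda>\<omega>. distr (P (return M (\<omega> !! k))) (stream_space M) (\<lambda>\<omega>'. stake k \<omega> @- \<omega>')"
  have Nm: "?N \<in> P \<mu> \<rightarrow>\<^sub>M prob_algebra (stream_space M)"
    using Nk_meas P_sets[OF \<mu>] by (simp cong: measurable_cong_sets)
  have Nm': "?N \<in> P \<mu> \<rightarrow>\<^sub>M subprob_algebra (stream_space M)"
    using measurable_prob_algebraD[OF Nm] .
  have ne: "space (P \<mu>) \<noteq> {}" using P_space[OF \<mu>] prob_space.not_empty by blast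
  have "emeasure (P \<mu>) X = emeasure (P \<mu> \<bind> ?N) X"
    by (subst Markov_bind[OF \<mu>, of k]) simp
  also have "\<dots> = (\<integral>\<^sup>+\<omega>. emeasure (?N \<omega>) X \<partial>P \<mu>)"
    using X by (intro emeasure_bind[OF ne Nm'])
  also have "\<dots> = (\<integral>\<^sup>+\<omega>. emeasure (P (return M (\<omega> !! k)))
            {\<omega>' \<in> space (stream_space M). stake k \<omega> @- \<omega>' \<in> X} \<partial>P \<mu>)"
  proof (rule nn_integral_cong)
    fix \<omega> assume "\<omega> \<in> space (P \<mu>)"
    then have \<omega>: "\<omega> \<in> streams (space M)" by (simp add: P_space'[OF \<mu>] space_stream_space)
    have k: "\<omega> !! k \<in> space M" using \<omega> by (simp add: snth_in)
    have sm: "(\<lambda>\<omega>'. stake k \<omega> @- \<omega>') \<in> P (return M (\<omega> !! k)) \<rightarrow>\<^sub>M stream_space M"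
    proof -
      have "(\<lambda>x. stake k \<omega> @- x) \<in> stream_space M \<rightarrow>\<^sub>M stream_space M"
        apply (rule measurable_shift)
         apply (rule measurable_const)
         apply (simp add: space_stream_space \<omega>)
        apply (rule measurable_ident_sets)
        apply simp
        done
      then show ?thesis using Q_space[OF k] by (simp cong: measurable_cong_sets)
    qed
    have "emeasure (?N \<omega>) X = emeasure (P (return M (\<omega> !! k)))
          ((\<lambda>\<omega>'. stake k \<omega> @- \<omega>') -` X \<inter> space (P (return M (\<omega> !! k))))"
      using X by (intro emeasure_distr[OF sm]) auto
    also have "(\<lambda>\<omega>'. stake k \<omega> @- \<omega>') -` X \<inter> space (P (return M (\<omega> !! k))) =
       {\<omega>' \<in> space (stream_space M). stake k \<omega> @- \<omega>' \<in> X}"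
      using Q_space[OF k] sets_eq_imp_space_eq by blast
    finally show "emeasure (?N \<omega>) X = emeasure (P (return M (\<omega> !! k)))
            {\<omega>' \<in> space (stream_space M). stake k \<omega> @- \<omega>' \<in> X}" .
  qed
  finally show ?thesis .
qed

lemma Markov_past:
  assumes \<mu>: "\<mu> \<in> space (prob_algebra M)" and H: "H \<in> sets (stream_space M)"
    and past: "\<And>\<omega> \<omega>'. \<omega> \<in> space (stream_space M) \<Longrightarrow> \<omega>' \<in> space (stream_space M) \<Longrightarrow>
         (stake k \<omega> @- \<omega>' \<in> H) = (\<omega> \<in> H)"
    and Z: "Z \<in> sets (stream_space M)"
  shows "emeasure (P \<mu>) (H \<inter> {\<omega> \<in> space (stream_space M). sdrop k \<omega> \<in> Z}) =
    (\<integral>\<^sup>+\<omega>. indicator H \<omega> * emeasure (P (return M (\<omega> !! k))) Z \<partial>P \<mu>)"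
proof -
  have X: "H \<inter> {\<omega> \<in> space (stream_space M). sdrop k \<omega> \<in> Z} \<in> sets (stream_space M)"
    using H Z by measurable
  show ?thesis
    unfolding M3[OF \<mu> X, of k]
  proof (rule nn_integral_cong)
    fix \<omega> assume "\<omega> \<in> space (P \<mu>)"
    then have \<omega>: "\<omega> \<in> space (stream_space M)" by (simp add: P_space'[OF \<mu>])
    have "{\<omega>' \<in> space (stream_space M). stake k \<omega> @- \<omega>' \<in> H \<inter> {\<omega> \<in> space (stream_space M). sdrop k \<omega> \<in> Z}}
       = (if \<omega> \<in> H then Z else {})"
      using past[OF \<omega>] sets.sets_into_space[OF Z] \<omega>
      by (auto simp: space_stream_space shift_streams' sdrop_shift)
    then show "emeasure (P (return M (\<omega> !! k))) {\<omega>' \<in> space (stream_space M). stake k \<omega> @- \<omega>' \<in> H \<inter> {\<omega> \<in> space (stream_space M). sdrop k \<omega> \<in> Z}}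
       = indicator H \<omega> * emeasure (P (return M (\<omega> !! k))) Z"
      by simp
  qed
qed

lemma M0:
  assumes \<nu>: "\<nu> \<in> space (prob_algebra M)" and Z: "Z \<in> sets (stream_space M)"
  shows "emeasure (P \<nu>) Z = (\<integral>\<^sup>+s. emeasure (P (return M s)) Z \<partial>\<nu>)"
proof -
  have Zs: "Z \<subseteq> space (stream_space M)" using sets.sets_into_space[OF Z] .
  have c0: "cyl M [] = space (stream_space M)" by (simp add: cyl_def)
  have "{\<omega>' \<in> space (stream_space M). stake 0 \<omega> @- \<omega>' \<in> Z} = Z" for \<omega> using Zs by auto
  then have "emeasure (P \<nu>) Z = (\<integral>\<^sup>+\<omega>. emeasure (P (return M (\<omega> !! 0))) Z \<partial>P \<nu>)"
    using M3[OF \<nu> Z, of 0] by simp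
  also have "\<dots> = (\<integral>\<^sup>+\<omega>. indicator (cyl M []) \<omega> * emeasure (P (return M (\<omega> !! 0))) Z \<partial>P \<nu>)"
    by (intro nn_integral_cong) (simp add: c0 P_space'[OF \<nu>])
  also have "\<dots> = (\<integral>\<^sup>+\<omega>. emeasure (P (return M (\<omega> !! length ([]::'a set list)))) Z \<partial>density (P \<nu>) (indicator (cyl M [])))"
    using P_sets[OF \<nu>] Z Qk_emeas[OF Z, of 0] by (subst nn_integral_density) (auto simp: c0 cong: measurable_cong_sets)
  also have "\<dots> = (\<integral>\<^sup>+s. emeasure (P (return M s)) Z \<partial>distr (density (P \<nu>) (indicator (cyl M []))) M (\<lambda>\<omega>. \<omega> !! length ([]::'a set list)))"
    using P_sets[OF \<nu>] Z measurable_prob_algebraD[OF Q_meas]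
    by (subst nn_integral_distr) (auto cong: measurable_cong_sets)
  also have "\<dots> = (\<integral>\<^sup>+s. emeasure (P (return M s)) Z \<partial>\<nu>)"
    by (subst SIG[OF \<nu>]) simp_all
  finally show ?thesis .
qed

end

locale sts2 = sts +
  fixes B :: "'a set" and As :: "'a set list" and p :: real
  assumes B[measurable]: "B \<in> sets M"
    and As_ne: "As \<noteq> []" and As: "set As \<subseteq> sets M"
    and p: "p > 0"
    and hyp: "\<forall>\<nu> \<in> space (prob_algebra M). emeasure (P \<nu>) (cyl M As) > 0 \<longrightarrow>
                 emeasure (P (cond_dist M P As \<nu>)) (runs_F M B) \<ge> ennreal p"
begin

lemma cylAs[measurable]: "cyl M As \<in> sets (stream_space M)"
  using As by simp

lemma runs_F_sets[measurable]: "runs_F M B \<in> sets (stream_space M)"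
  unfolding runs_F_def by measurable

lemma runs_G_eq: "runs_G M (space M - B) = space (stream_space M) - runs_F M B"
  by (auto simp: runs_G_def runs_F_def space_stream_space snth_in)

lemma runs_G_sets[measurable]: "runs_G M (space M - B) \<in> sets (stream_space M)"
  unfolding runs_G_eq by measurable

lemma cond_prob:
  assumes \<nu>: "\<nu> \<in> space (prob_algebra M)" and c: "emeasure (P \<nu>) (cyl M As) \<noteq> 0"
  shows "cond_dist M P As \<nu> \<in> space (prob_algebra M)"
proof -
  interpret Pn: prob_space "P \<nu>" using P_space[OF \<nu>] by blast
  have "prob_space (uniform_measure (P \<nu>) (cyl M As))"
    using c by (intro prob_space_uniform_measure) auto
  then have "prob_space (cond_dist M P As \<nu>)"
    unfolding cond_dist_def
    by (rule prob_space.prob_space_distr) (simp add: P_sets[OF \<nu>] cong: measurable_cong_sets)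
  then show ?thesis by (simp add: space_prob_algebra cond_dist_def)
qed

lemma cond_int:
  assumes \<nu>: "\<nu> \<in> space (prob_algebra M)" and c: "emeasure (P \<nu>) (cyl M As) \<noteq> 0"
    and f[measurable]: "f \<in> borel_measurable M"
  shows "(\<integral>\<^sup>+\<omega>. indicator (cyl M As) \<omega> * f (\<omega> !! (length As - 1)) \<partial>P \<nu>)
     = emeasure (P \<nu>) (cyl M As) * (\<integral>\<^sup>+t. f t \<partial>cond_dist M P As \<nu>)"
proof -
  interpret Pn: prob_space "P \<nu>" using P_space[OF \<nu>] by blast
  have sP: "sets (P \<nu>) = sets (stream_space M)" using P_sets[OF \<nu>] .
  have fm: "(\<lambda>\<omega>. f (\<omega> !! (length As - 1))) \<in> borel_measurable (P \<nu>)"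
    using sP by (simp cong: measurable_cong_sets)
  have cm: "cyl M As \<in> sets (P \<nu>)" using sP by simp
  have "(\<integral>\<^sup>+t. f t \<partial>cond_dist M P As \<nu>) = (\<integral>\<^sup>+\<omega>. f (\<omega> !! (length As - 1)) \<partial>uniform_measure (P \<nu>) (cyl M As))"
    unfolding cond_dist_def using sP by (subst nn_integral_distr) (auto cong: measurable_cong_sets)
  also have "\<dots> = (\<integral>\<^sup>+\<omega>. f (\<omega> !! (length As - 1)) * indicator (cyl M As) \<omega> \<partial>P \<nu>) / emeasure (P \<nu>) (cyl M As)"
    by (rule nn_integral_uniform_measure[OF fm cm])
  finally have "emeasure (P \<nu>) (cyl M As) * (\<integral>\<^sup>+t. f t \<partial>cond_dist M P As \<nu>) =
     emeasure (P \<nu>) (cyl M As) * ((\<integral>\<^sup>+\<omega>. f (\<omega> !! (length As - 1)) * indicator (cyl M As) \<omega> \<partial>P \<nu>) / emeasure (P \<nu>) (cyl M As))"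
    by simp
  also have "\<dots> = (\<integral>\<^sup>+\<omega>. f (\<omega> !! (length As - 1)) * indicator (cyl M As) \<omega> \<partial>P \<nu>)"
    using c Pn.emeasure_finite[of "cyl M As"]
    by (simp add: ennreal_times_divide mult.commute[of "emeasure (P \<nu>) (cyl M As)"] ennreal_mult_divide_eq)
  finally show ?thesis by (simp add: mult.commute)
qed

lemma cond_G:
  assumes \<nu>: "\<nu> \<in> space (prob_algebra M)" and c: "emeasure (P \<nu>) (cyl M As) \<noteq> 0"
  shows "emeasure (P (cond_dist M P As \<nu>)) (runs_G M (space M - B)) \<le> ennreal (1 - p)"
proof -
  have cp: "cond_dist M P As \<nu> \<in> space (prob_algebra M)" by (rule cond_prob[OF \<nu> c])
  interpret Pc: prob_space "P (cond_dist M P As \<nu>)" using P_space[OF cp] by blast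
  have h: "emeasure (P (cond_dist M P As \<nu>)) (runs_F M B) \<ge> ennreal p"
    using hyp \<nu> c by (auto simp: zero_less_iff_neq_zero)
  have "Pc.prob (runs_F M B) \<ge> p"
    using h by (simp add: Pc.emeasure_eq_measure)
  moreover have "Pc.prob (runs_G M (space M - B)) = 1 - Pc.prob (runs_F M B)"
    unfolding runs_G_eq using P_space'[OF cp] P_sets[OF cp]
    by (metis Pc.prob_compl runs_F_sets)
  ultimately show ?thesis
    by (simp add: Pc.emeasure_eq_measure ennreal_leI)
qed

lemma cyl_past:
  assumes "\<omega> \<in> space (stream_space M)" "\<omega>' \<in> space (stream_space M)" "length Cs \<le> k"
  shows "(stake k \<omega> @- \<omega>' \<in> cyl M Cs) = (\<omega> \<in> cyl M Cs)"
proof -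
  have "{\<omega>' \<in> space (stream_space M). stake k \<omega> @- \<omega>' \<in> cyl M Cs} =
    (if \<omega> \<in> cyl M (take k Cs) then cyl M (drop k Cs) else {})"
    using assms(1) by (intro shift_cyl) (simp add: space_stream_space)
  moreover have "take k Cs = Cs" "drop k Cs = []" using assms(3) by auto
  moreover have "cyl M [] = space (stream_space M)" by (simp add: cyl_def)
  ultimately show ?thesis using assms(2) by (auto split: if_splits)
qed

lemma PB:
  assumes s: "s \<in> space M"
  shows "emeasure (P (return M s)) (cyl M As \<inter> runs_G M (space M - B)) \<le>
         ennreal (1 - p) * emeasure (P (return M s)) (cyl M As)"
proof (cases "emeasure (P (return M s)) (cyl M As) = 0")
  case True
  then show ?thesis
    using emeasure_mono[of "cyl M As \<inter> runs_G M (space M - B)" "cyl M As" "P (return M s)"]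
      P_sets[OF return_prob[OF s]] by simp
next
  case False
  define \<nu> where "\<nu> = return M s"
  have \<nu>: "\<nu> \<in> space (prob_algebra M)" unfolding \<nu>_def by (rule return_prob[OF s])
  have c: "emeasure (P \<nu>) (cyl M As) \<noteq> 0" using False by (simp add: \<nu>_def)
  define n where "n = length As - 1"
  define Cs where "Cs = take n As"
  define A where "A = As ! n"
  define G where "G = runs_G M (space M - B)"
  have Gs[measurable]: "G \<in> sets (stream_space M)" unfolding G_def by simp
  have AsCs: "As = Cs @ [A]" unfolding Cs_def A_def n_def using As_ne
    by (metis append_butlast_last_id butlast_conv_take last_conv_nth)
  have lCs: "length Cs = n" unfolding Cs_def n_def using As_ne by simp
  have Am[measurable]: "A \<in> sets M" using As AsCs by auto
  have Csm: "set Cs \<subseteq> sets M" using As AsCs by auto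
  have Csm'[measurable]: "cyl M Cs \<in> sets (stream_space M)" using Csm by simp
  define Z where "Z = cyl M [A] \<inter> G"
  have Zm[measurable]: "Z \<in> sets (stream_space M)" unfolding Z_def by simp
  have sub: "cyl M As \<inter> G \<subseteq> cyl M Cs \<inter> {\<omega> \<in> space (stream_space M). sdrop n \<omega> \<in> Z}"
  proof
    fix \<omega> assume w: "\<omega> \<in> cyl M As \<inter> G"
    then have ws: "\<omega> \<in> space (stream_space M)" by (auto simp: cyl_def)
    have "\<omega> \<in> cyl M Cs" "\<omega> !! n \<in> A" using w unfolding AsCs cyl_append lCs by auto
    moreover have "sdrop n \<omega> \<in> G" using w ws
      by (auto simp: G_def runs_G_def space_stream_space sdrop_snth streams_iff_snth)
    moreover have "sdrop n \<omega> \<in> space (stream_space M)"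
      using ws by (auto simp: space_stream_space sdrop_snth streams_iff_snth)
    ultimately show "\<omega> \<in> cyl M Cs \<inter> {\<omega> \<in> space (stream_space M). sdrop n \<omega> \<in> Z}"
      using ws by (auto simp: Z_def cyl_def sdrop_snth)
  qed
  have "emeasure (P \<nu>) (cyl M As \<inter> G) \<le> emeasure (P \<nu>) (cyl M Cs \<inter> {\<omega> \<in> space (stream_space M). sdrop n \<omega> \<in> Z})"
    using sub P_sets[OF \<nu>] by (intro emeasure_mono) auto
  also have "\<dots> = (\<integral>\<^sup>+\<omega>. indicator (cyl M Cs) \<omega> * emeasure (P (return M (\<omega> !! n))) Z \<partial>P \<nu>)"
    by (rule Markov_past[OF \<nu> Csm' _ Zm]) (rule cyl_past, auto simp: lCs)
  also have "\<dots> \<le> (\<integral>\<^sup>+\<omega>. indicator (cyl M As) \<omega> * emeasure (P (return M (\<omega> !! (length As - 1)))) G \<partial>P \<nu>)"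
  proof (rule nn_integral_mono)
    fix \<omega> assume "\<omega> \<in> space (P \<nu>)"
    then have ws: "\<omega> \<in> space (stream_space M)" by (simp add: P_space'[OF \<nu>])
    then have t: "\<omega> !! n \<in> space M" by (simp add: space_stream_space snth_in)
    show "indicator (cyl M Cs) \<omega> * emeasure (P (return M (\<omega> !! n))) Z
        \<le> indicator (cyl M As) \<omega> * emeasure (P (return M (\<omega> !! (length As - 1)))) G"
    proof (cases "\<omega> \<in> cyl M Cs \<and> \<omega> !! n \<in> A")
      case True
      then have "\<omega> \<in> cyl M As" using ws unfolding AsCs cyl_append lCs by auto
      moreover have "emeasure (P (return M (\<omega> !! n))) Z \<le> emeasure (P (return M (\<omega> !! n))) G"
        using P_sets[OF return_prob[OF t]] by (intro emeasure_mono) (auto simp: Z_def)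
      ultimately show ?thesis using True by (simp add: n_def)
    next
      case False
      moreover have "\<omega> !! n \<notin> A \<Longrightarrow> emeasure (P (return M (\<omega> !! n))) Z = 0"
      proof -
        assume nA: "\<omega> !! n \<notin> A"
        have "emeasure (P (return M (\<omega> !! n))) Z \<le> emeasure (P (return M (\<omega> !! n))) (cyl M [A])"
          using P_sets[OF return_prob[OF t]] by (intro emeasure_mono) (auto simp: Z_def)
        also have "\<dots> = 0" using Q_cyl[OF t, of "[A]"] cyl_fun_single[OF t, of A] nA
          by (simp del: cyl_fun.simps)
        finally show ?thesis by simp
      qed
      ultimately show ?thesis by auto
    qed
  qed
  also have "\<dots> = emeasure (P \<nu>) (cyl M As) * (\<integral>\<^sup>+t. emeasure (P (return M t)) G \<partial>cond_dist M P As \<nu>)"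
    by (rule cond_int[OF \<nu> c]) (rule measurable_compose[OF measurable_prob_algebraD[OF Q_meas]
        measurable_emeasure_subprob_algebra[OF Gs]])
  also have "\<dots> = emeasure (P \<nu>) (cyl M As) * emeasure (P (cond_dist M P As \<nu>)) G"
    by (simp add: M0[OF cond_prob[OF \<nu> c] Gs])
  also have "\<dots> \<le> emeasure (P \<nu>) (cyl M As) * ennreal (1 - p)"
    unfolding G_def by (intro mult_left_mono cond_G[OF \<nu> c]) simp
  finally show ?thesis by (simp add: \<nu>_def G_def mult.commute)
qed

lemma CB:
  assumes \<mu>: "\<mu> \<in> space (prob_algebra M)" and H: "H \<in> sets (stream_space M)"
    and past: "\<And>\<omega> \<omega>'. \<omega> \<in> space (stream_space M) \<Longrightarrow> \<omega>' \<in> space (stream_space M) \<Longrightarrow>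
         (stake k \<omega> @- \<omega>' \<in> H) = (\<omega> \<in> H)"
  shows "emeasure (P \<mu>) (H \<inter> {\<omega> \<in> space (stream_space M). sdrop k \<omega> \<in> cyl M As \<inter> runs_G M (space M - B)})
    \<le> ennreal (1 - p) * emeasure (P \<mu>) (H \<inter> {\<omega> \<in> space (stream_space M). sdrop k \<omega> \<in> cyl M As})"
proof -
  have sP: "sets (P \<mu>) = sets (stream_space M)" using P_sets[OF \<mu>] .
  have m: "(\<lambda>\<omega>. indicator H \<omega> * emeasure (P (return M (\<omega> !! k))) (cyl M As)) \<in> borel_measurable (P \<mu>)"
    using sP H by (simp cong: measurable_cong_sets)
  have "emeasure (P \<mu>) (H \<inter> {\<omega> \<in> space (stream_space M). sdrop k \<omega> \<in> cyl M As \<inter> runs_G M (space M - B)})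
     = (\<integral>\<^sup>+\<omega>. indicator H \<omega> * emeasure (P (return M (\<omega> !! k))) (cyl M As \<inter> runs_G M (space M - B)) \<partial>P \<mu>)"
    by (rule Markov_past[OF \<mu> H past]) simp_all
  also have "\<dots> \<le> (\<integral>\<^sup>+\<omega>. ennreal (1 - p) * (indicator H \<omega> * emeasure (P (return M (\<omega> !! k))) (cyl M As)) \<partial>P \<mu>)"
  proof (rule nn_integral_mono)
    fix \<omega> assume "\<omega> \<in> space (P \<mu>)"
    then have t: "\<omega> !! k \<in> space M" by (simp add: P_space'[OF \<mu>] space_stream_space snth_in)
    show "indicator H \<omega> * emeasure (P (return M (\<omega> !! k))) (cyl M As \<inter> runs_G M (space M - B))
      \<le> ennreal (1 - p) * (indicator H \<omega> * emeasure (P (return M (\<omega> !! k))) (cyl M As))"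
      using PB[OF t] by (auto split: split_indicator)
  qed
  also have "\<dots> = ennreal (1 - p) * (\<integral>\<^sup>+\<omega>. indicator H \<omega> * emeasure (P (return M (\<omega> !! k))) (cyl M As) \<partial>P \<mu>)"
    by (rule nn_integral_cmult[OF m])
  also have "\<dots> = ennreal (1 - p) * emeasure (P \<mu>) (H \<inter> {\<omega> \<in> space (stream_space M). sdrop k \<omega> \<in> cyl M As})"
    by (subst Markov_past[OF \<mu> H past]) simp_all
  finally show ?thesis .
qed

end


context sts2 begin

definition occ :: "nat \<Rightarrow> 'a stream \<Rightarrow> bool" where
  "occ t \<omega> \<longleftrightarrow> sdrop t \<omega> \<in> cyl M As"

lemma occ_meas[measurable]: "Measurable.pred (stream_space M) (occ t)"
  unfolding occ_def by measurable

lemma occ_iff: "\<omega> \<in> space (stream_space M) \<Longrightarrow> occ t \<omega> \<longleftrightarrow> (\<forall>l<length As. \<omega> !! (t + l) \<in> As ! l)"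
  by (auto simp: occ_def cyl_def space_stream_space sdrop_snth streams_iff_snth)

definition Hs :: "nat \<Rightarrow> nat \<Rightarrow> nat \<Rightarrow> 'a stream set" where
  "Hs r m i = {\<omega> \<in> space (stream_space M). (\<forall>t. t < r + i * length As \<longrightarrow> \<omega> !! t \<notin> B) \<and>
      (\<forall>i'. m \<le> i' \<and> i' < i \<longrightarrow> \<not> occ (r + i' * length As) \<omega>)}"

lemma Hs_sets[measurable]: "Hs r m i \<in> sets (stream_space M)"
  unfolding Hs_def by measurable

lemma Hs_past:
  assumes "\<omega> \<in> space (stream_space M)" "\<omega>' \<in> space (stream_space M)"
  shows "(stake (r + i * length As) \<omega> @- \<omega>' \<in> Hs r m i) = (\<omega> \<in> Hs r m i)"
proof -
  let ?k = "r + i * length As"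
  let ?w = "stake ?k \<omega> @- \<omega>'"
  have ws: "?w \<in> space (stream_space M)" using assms by (simp add: space_stream_space shift_streams')
  have eq: "\<And>j. j < ?k \<Longrightarrow> ?w !! j = \<omega> !! j" by (simp add: shift_snth)
  have occ_eq: "occ (r + i' * length As) ?w = occ (r + i' * length As) \<omega>" if "i' < i" for i'
  proof -
    have "Suc i' * length As \<le> i * length As" using that by (intro mult_le_mono1) simp
    then have "\<And>l. l < length As \<Longrightarrow> r + i' * length As + l < ?k" by simp
    then show ?thesis unfolding occ_iff[OF ws] occ_iff[OF assms(1)] using eq by auto
  qed
  show ?thesis unfolding Hs_def using ws assms(1) eq occ_eq by auto
qed

definition Es :: "nat \<Rightarrow> nat \<Rightarrow> nat \<Rightarrow> 'a stream set" where
  "Es r m i = Hs r m i \<inter> {\<omega> \<in> space (stream_space M). sdrop (r + i * length As) \<omega> \<in> cyl M As}"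

definition Fs :: "nat \<Rightarrow> nat \<Rightarrow> nat \<Rightarrow> 'a stream set" where
  "Fs r m i = Hs r m i \<inter> {\<omega> \<in> space (stream_space M). sdrop (r + i * length As) \<omega> \<in> cyl M As \<inter> runs_G M (space M - B)}"

definition Cs :: "nat \<Rightarrow> nat \<Rightarrow> 'a stream set" where
  "Cs r m = (\<Union>j. Es r m (m + j))"

definition Ds :: "nat \<Rightarrow> 'a stream set" where
  "Ds r = (\<Inter>m. Cs r m)"

lemma Es_sets[measurable]: "Es r m i \<in> sets (stream_space M)" unfolding Es_def by measurable
lemma Fs_sets[measurable]: "Fs r m i \<in> sets (stream_space M)" unfolding Fs_def by measurable
lemma Cs_sets[measurable]: "Cs r m \<in> sets (stream_space M)" unfolding Cs_def by measurable
lemma Ds_sets[measurable]: "Ds r \<in> sets (stream_space M)" unfolding Ds_def by measurable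

lemma L_pos: "length As > 0" using As_ne by simp

lemma least_in_Es:
  assumes w: "\<omega> \<in> space (stream_space M)" and nB: "\<forall>t. \<omega> !! t \<notin> B"
    and inf: "\<forall>m. \<exists>i\<ge>m. occ (r + i * length As) \<omega>"
  shows "\<omega> \<in> Es r m (LEAST i. m \<le> i \<and> occ (r + i * length As) \<omega>)"
    and "m \<le> (LEAST i. m \<le> i \<and> occ (r + i * length As) \<omega>)"
proof -
  let ?i = "LEAST i. m \<le> i \<and> occ (r + i * length As) \<omega>"
  have ex: "\<exists>i. m \<le> i \<and> occ (r + i * length As) \<omega>" using inf by auto
  have i: "m \<le> ?i \<and> occ (r + ?i * length As) \<omega>" using LeastI_ex[OF ex] .
  have nl: "\<And>i'. m \<le> i' \<and> i' < ?i \<Longrightarrow> \<not> occ (r + i' * length As) \<omega>"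
    using not_less_Least by blast
  show "\<omega> \<in> Es r m ?i" using w nB i nl by (auto simp: Es_def Hs_def occ_def)
  show "m \<le> ?i" using i by simp
qed

lemma Ds_sub_Fs: "Ds r \<subseteq> (\<Union>j. Fs r m (m + j))"
proof
  fix \<omega> assume w: "\<omega> \<in> Ds r"
  have ex: "\<forall>m. \<exists>i\<ge>m. \<omega> \<in> Es r m i"
  proof
    fix m from w have "\<omega> \<in> Cs r m" by (simp add: Ds_def)
    then obtain j where "\<omega> \<in> Es r m (m + j)" by (auto simp: Cs_def)
    then show "\<exists>i\<ge>m. \<omega> \<in> Es r m i" by (intro exI[of _ "m + j"]) auto
  qed
  then have ws: "\<omega> \<in> space (stream_space M)" by (auto simp: Es_def)
  have nB: "\<forall>t. \<omega> !! t \<notin> B"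
  proof
    fix t
    obtain i where i: "i \<ge> Suc t" "\<omega> \<in> Es r (Suc t) i" using ex by blast
    have "1 \<le> length As" using L_pos by linarith
    then have "i * 1 \<le> i * length As" by (rule mult_le_mono2)
    then have "i \<le> i * length As" by simp
    then have "t < r + i * length As" using i(1) by linarith
    then show "\<omega> !! t \<notin> B" using i(2) by (auto simp: Es_def Hs_def)
  qed
  have inf: "\<forall>m. \<exists>i\<ge>m. occ (r + i * length As) \<omega>"
    using ex by (force simp: Es_def occ_def)
  let ?i = "LEAST i. m \<le> i \<and> occ (r + i * length As) \<omega>"
  have E: "\<omega> \<in> Es r m ?i" "m \<le> ?i" using least_in_Es[OF ws nB inf] by auto
  have "sdrop (r + ?i * length As) \<omega> \<in> runs_G M (space M - B)"
    using ws nB by (auto simp: runs_G_def space_stream_space sdrop_snth streams_iff_snth)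
  then have "\<omega> \<in> Fs r m ?i" using E(1) by (auto simp: Es_def Fs_def)
  then have "\<omega> \<in> Fs r m (m + (?i - m))" using E(2) by simp
  then show "\<omega> \<in> (\<Union>j. Fs r m (m + j))" by blast
qed

lemma Ds_zero:
  assumes \<mu>: "\<mu> \<in> space (prob_algebra M)"
  shows "emeasure (P \<mu>) (Ds r) = 0"
proof -
  interpret Pm: prob_space "P \<mu>" using P_space[OF \<mu>] by blast
  have sP: "sets (P \<mu>) = sets (stream_space M)" using P_sets[OF \<mu>] .
  have bound: "emeasure (P \<mu>) (Ds r) \<le> ennreal (1 - p) * emeasure (P \<mu>) (Cs r m)" for m
  proof -
    have sumeq: "(\<Sum>j. emeasure (P \<mu>) (Es r m (m + j))) = emeasure (P \<mu>) (Cs r m)"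
      unfolding Cs_def
    proof (rule suminf_emeasure)
      show "range (\<lambda>j. Es r m (m + j)) \<subseteq> sets (P \<mu>)" using Es_sets by (auto simp: sP)
      show "disjoint_family (\<lambda>j. Es r m (m + j))"
      proof (unfold disjoint_family_on_def, intro ballI impI)
        fix a b :: nat assume "a \<noteq> b"
        { fix a b :: nat assume ab: "a < b"
          have "\<omega> \<notin> Es r m (m + a) \<inter> Es r m (m + b)" for \<omega>
          proof
            assume w: "\<omega> \<in> Es r m (m + a) \<inter> Es r m (m + b)"
            then have "occ (r + (m + a) * length As) \<omega>" by (simp add: Es_def occ_def)
            moreover have "\<forall>i'. m \<le> i' \<and> i' < m + b \<longrightarrow> \<not> occ (r + i' * length As) \<omega>"
              using w unfolding Es_def Hs_def by blast
            ultimately show False using ab by auto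
          qed
          then have "Es r m (m + a) \<inter> Es r m (m + b) = {}" by blast }
        then show "Es r m (m + a) \<inter> Es r m (m + b) = {}" using \<open>a \<noteq> b\<close>
          by (metis inf_commute linorder_neqE_nat)
      qed
    qed
    have "emeasure (P \<mu>) (Ds r) \<le> emeasure (P \<mu>) (\<Union>j. Fs r m (m + j))"
      by (rule emeasure_mono[OF Ds_sub_Fs]) (unfold sP, measurable)
    also have "\<dots> \<le> (\<Sum>j. emeasure (P \<mu>) (Fs r m (m + j)))"
      by (rule emeasure_subadditive_countably) (use Fs_sets in \<open>auto simp: sP\<close>)
    also have "\<dots> \<le> (\<Sum>j. ennreal (1 - p) * emeasure (P \<mu>) (Es r m (m + j)))"
    proof (intro suminf_le summableI)
      fix j
      show "emeasure (P \<mu>) (Fs r m (m + j)) \<le> ennreal (1 - p) * emeasure (P \<mu>) (Es r m (m + j))"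
        unfolding Fs_def Es_def
        by (rule CB[OF \<mu> Hs_sets]) (rule Hs_past)
    qed
    also have "\<dots> = ennreal (1 - p) * (\<Sum>j. emeasure (P \<mu>) (Es r m (m + j)))"
      by simp
    also have "\<dots> = ennreal (1 - p) * emeasure (P \<mu>) (Cs r m)"
      by (simp only: sumeq)
    finally show ?thesis .
  qed
  have dec: "decseq (Cs r)"
  proof (rule decseq_SucI)
    fix m show "Cs r (Suc m) \<subseteq> Cs r m"
    proof
      fix \<omega> assume "\<omega> \<in> Cs r (Suc m)"
      then obtain j where w: "\<omega> \<in> Es r (Suc m) (Suc m + j)" by (auto simp: Cs_def)
      then have ws: "\<omega> \<in> space (stream_space M)" by (simp add: Es_def)
      let ?i = "LEAST i. m \<le> i \<and> occ (r + i * length As) \<omega>"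
      have ex: "\<exists>i. m \<le> i \<and> occ (r + i * length As) \<omega>"
        using w by (intro exI[of _ "Suc m + j"]) (auto simp: Es_def occ_def)
      have i: "m \<le> ?i \<and> occ (r + ?i * length As) \<omega>" using LeastI_ex[OF ex] .
      have le: "?i \<le> Suc m + j"
        using w by (intro Least_le) (auto simp: Es_def occ_def)
      have nl: "\<And>i'. m \<le> i' \<and> i' < ?i \<Longrightarrow> \<not> occ (r + i' * length As) \<omega>"
        using not_less_Least by blast
      have lek: "r + ?i * length As \<le> r + (Suc m + j) * length As" using mult_le_mono1[OF le, of "length As"] by linarith
      have nB: "\<forall>t. t < r + (Suc m + j) * length As \<longrightarrow> \<omega> !! t \<notin> B"
        using w unfolding Es_def Hs_def by blast
      have "\<forall>t. t < r + ?i * length As \<longrightarrow> \<omega> !! t \<notin> B" using nB lek by auto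
      moreover have "sdrop (r + ?i * length As) \<omega> \<in> cyl M As" using i by (simp add: occ_def)
      ultimately have "\<omega> \<in> Es r m ?i" using ws nl unfolding Es_def Hs_def by blast
      then have "\<omega> \<in> Es r m (m + (?i - m))" using i by simp
      then show "\<omega> \<in> Cs r m" by (auto simp: Cs_def)
    qed
  qed
  have lim: "(INF m. emeasure (P \<mu>) (Cs r m)) = emeasure (P \<mu>) (Ds r)"
    unfolding Ds_def
    apply (rule INF_emeasure_decseq)
      apply (use sP in force)
     apply (rule dec)
    apply (simp add: Pm.emeasure_eq_measure)
    done
  define a where "a = Pm.prob (Ds r)"
  have a: "emeasure (P \<mu>) (Ds r) = ennreal a" "a \<ge> 0" by (simp_all add: a_def Pm.emeasure_eq_measure)
  show ?thesis
  proof (cases "p < 1")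
    case False
    then have "ennreal (1 - p) = 0" by (simp add: ennreal_eq_0_iff)
    then show ?thesis using bound[of 0] by simp
  next
    case True
    have "ennreal (a / (1 - p)) \<le> emeasure (P \<mu>) (Cs r m)" for m
    proof -
      have "ennreal a \<le> ennreal (1 - p) * ennreal (Pm.prob (Cs r m))"
        using bound[of m] a by (simp add: Pm.emeasure_eq_measure)
      also have "\<dots> = ennreal ((1 - p) * Pm.prob (Cs r m))" using True by (simp add: ennreal_mult)
      finally have "a \<le> (1 - p) * Pm.prob (Cs r m)"
        by (subst (asm) ennreal_le_iff) (use True in auto)
      then have "a / (1 - p) \<le> Pm.prob (Cs r m)" using True by (simp add: divide_le_eq mult.commute)
      then show ?thesis by (simp add: Pm.emeasure_eq_measure)
    qed
    then have "ennreal (a / (1 - p)) \<le> (INF m. emeasure (P \<mu>) (Cs r m))" by (rule INF_greatest)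
    then have "ennreal (a / (1 - p)) \<le> ennreal a" using lim a by simp
    then have "a / (1 - p) \<le> a" using a(2) by (subst (asm) ennreal_le_iff) auto
    then have "a \<le> (1 - p) * a" using True by (simp add: divide_le_eq mult.commute)
    then have "p * a \<le> 0" by (simp add: algebra_simps)
    then have "a = 0" using p a(2) by (simp add: mult_le_0_iff)
    then show ?thesis using a by simp
  qed
qed


lemma pigeon:
  fixes Q :: "nat \<Rightarrow> bool" and L :: nat
  assumes L: "L > 0" and inf: "\<exists>\<^sub>\<infinity>k. Q k"
  shows "\<exists>r. \<exists>\<^sub>\<infinity>i. Q (r + i * L)"
proof (rule ccontr)
  assume "\<not> ?thesis"
  then have fin: "\<And>r. finite {i. Q (r + i * L)}" by (simp add: INFM_iff_infinite)
  have "{k. Q k} \<subseteq> (\<Union>r<L. (\<lambda>i. r + i * L) ` {i. Q (r + i * L)})"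
  proof
    fix k assume "k \<in> {k. Q k}"
    then have "Q (k mod L + (k div L) * L)" by simp
    moreover have "k mod L < L" using L by simp
    ultimately show "k \<in> (\<Union>r<L. (\<lambda>i. r + i * L) ` {i. Q (r + i * L)})"
      by (intro UN_I[of "k mod L"]) (auto intro!: image_eqI[of _ _ "k div L"])
  qed
  then have "finite {k. Q k}" by (rule finite_subset) (auto intro: fin)
  then show False using inf by (simp add: INFM_iff_infinite)
qed

lemma main:
  assumes \<mu>: "\<mu> \<in> space (prob_algebra M)"
  shows "emeasure (P \<mu>) (runs_G M (space M - B) \<inter> runs_GF_phi M As) = 0"
proof -
  have sP: "sets (P \<mu>) = sets (stream_space M)" using P_sets[OF \<mu>] .
  have sub: "runs_G M (space M - B) \<inter> runs_GF_phi M As \<subseteq> (\<Union>r. Ds r)"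
  proof
    fix \<omega> assume w: "\<omega> \<in> runs_G M (space M - B) \<inter> runs_GF_phi M As"
    then have ws: "\<omega> \<in> space (stream_space M)" and nB: "\<forall>t. \<omega> !! t \<notin> B"
      and inf: "\<exists>\<^sub>\<infinity>k. occ k \<omega>"
      by (auto simp: runs_G_def runs_GF_phi_def occ_def)
    obtain r where "\<exists>\<^sub>\<infinity>i. occ (r + i * length As) \<omega>" using pigeon[OF L_pos inf] by blast
    then have inf': "\<forall>m. \<exists>i\<ge>m. occ (r + i * length As) \<omega>" by (simp add: INFM_nat_le)
    have "\<omega> \<in> Ds r"
      unfolding Ds_def Cs_def
    proof
      fix m
      let ?i = "LEAST i. m \<le> i \<and> occ (r + i * length As) \<omega>"
      have "\<omega> \<in> Es r m ?i" "m \<le> ?i" using least_in_Es[OF ws nB inf'] by auto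
      then have "\<omega> \<in> Es r m (m + (?i - m))" by simp
      then show "\<omega> \<in> (\<Union>j. Es r m (m + j))" by blast
    qed
    then show "\<omega> \<in> (\<Union>r. Ds r)" by blast
  qed
  have "emeasure (P \<mu>) (runs_G M (space M - B) \<inter> runs_GF_phi M As) \<le> emeasure (P \<mu>) (\<Union>r. Ds r)"
    by (rule emeasure_mono[OF sub]) (unfold sP, measurable)
  also have "\<dots> = 0"
    by (rule emeasure_UN_eq_0[OF Ds_zero[OF \<mu>]]) (use Ds_sets in \<open>auto simp: sP\<close>)
  finally show ?thesis by simp
qed

end



theorem mainTheorem2:
  fixes M :: "'a measure" and K :: "'a \<Rightarrow> 'a measure"
    and P :: "'a measure \<Rightarrow> 'a stream measure"
    and B :: "'a set" and As :: "'a set list" and p :: real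
  assumes kernel: "K \<in> M \<rightarrow>\<^sub>M prob_algebra M"
    and path: "is_path_measure M K P"
    and B: "B \<in> sets M"
    and As_ne: "As \<noteq> []" and As: "set As \<subseteq> sets M"
    and p: "p > 0"
    and hyp: "\<forall>\<nu> \<in> space (prob_algebra M). emeasure (P \<nu>) (cyl M As) > 0 \<longrightarrow>
                 emeasure (P (cond_dist M P As \<nu>)) (runs_F M B) \<ge> ennreal p"
  shows "\<forall>\<mu> \<in> space (prob_algebra M).
           emeasure (P \<mu>) (runs_G M (space M - B) \<inter> runs_GF_phi M As) = 0"
proof -
  interpret S: sts2 M K P B As p
    using kernel path B As_ne As p hyp by unfold_locales blast+
  show ?thesis using S.main by blast
qed

end
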